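(* Let $R$ be a finite commutative ring with identity. Then $$\chi\big(\mathrm{Reg}(\Gamma(R))\big)\le |J(R)|\,\chi\big(\mathrm{Reg}(\Gamma(R/J(R)))\big).$$ Moreover, if $2\notin Z(R)$, then $\chi\big(\mathrm{Reg}(\Gamma(R))\big)=\chi\big(\mathrm{Reg}(\Gamma(R/J(R)))\big)$.
   Context: For a commutative ring $S$, $Z(S)$ is the set of zero-divisors (including $0$), $\mathrm{Reg}(S)=S\setminus Z(S)$, and $J(S)$ is the Jacobson radical. The total graph $T(\Gamma(S))$ is the simple graph with vertex set $S$ in which distinct $x,y$ are adjacent iff $x+y\in Z(S)$; $\mathrm{Reg}(\Gamma(S))$ is its induced subgraph on $\mathrm{Reg}(S)$. $\chi$ denotes chromatic number. *)

theory Defs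
  imports "HOL-Algebra.QuotRing"
begin

definition zero_divs :: "('a, 'b) ring_scheme \<Rightarrow> 'a set" where
  "zero_divs S = {\<zero>\<^bsub>S\<^esub>} \<union>
     {a \<in> carrier S. \<exists>b \<in> carrier S. b \<noteq> \<zero>\<^bsub>S\<^esub> \<and> a \<otimes>\<^bsub>S\<^esub> b = \<zero>\<^bsub>S\<^esub>}"

definition regular_elems :: "('a, 'b) ring_scheme \<Rightarrow> 'a set" where
  "regular_elems S = carrier S - zero_divs S"

definition jacobson :: "('a, 'b) ring_scheme \<Rightarrow> 'a set" where
  "jacobson S = carrier S \<inter> \<Inter> {I. maximalideal I S}"

text \<open>Adjacency in the total graph T(Gamma(S)).\<close>
definition total_adj :: "('a, 'b) ring_scheme \<Rightarrow> 'a \<Rightarrow> 'a \<Rightarrow> bool" where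
  "total_adj S x y \<longleftrightarrow> x \<noteq> y \<and> x \<oplus>\<^bsub>S\<^esub> y \<in> zero_divs S"

definition chromatic_number :: "'a set \<Rightarrow> ('a \<Rightarrow> 'a \<Rightarrow> bool) \<Rightarrow> nat" where
  "chromatic_number V E = (LEAST k. \<exists>c :: 'a \<Rightarrow> nat.
      (\<forall>x\<in>V. c x < k) \<and> (\<forall>x\<in>V. \<forall>y\<in>V. E x y \<longrightarrow> c x \<noteq> c y))"

definition chi_reg :: "('a, 'b) ring_scheme \<Rightarrow> nat" where
  "chi_reg S = chromatic_number (regular_elems S) (total_adj S)"

end

theory Submission imports Defs begin

lemma (in cring) fin_nzd_unit:
  assumes fin: "finite (carrier R)" and nt: "\<one> \<noteq> \<zero>" and a: "a \<in> carrier R"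
  shows "(a \<notin> zero_divs R) = (a \<in> Units R)"
proof
  assume na: "a \<notin> zero_divs R"
  hence a0: "a \<noteq> \<zero>" and nz: "\<And>b. b \<in> carrier R \<Longrightarrow> a \<otimes> b = \<zero> \<Longrightarrow> b = \<zero>"
    unfolding zero_divs_def using a by auto
  have inj: "inj_on (\<lambda>b. a \<otimes> b) (carrier R)"
  proof (rule inj_onI)
    fix x y assume x: "x \<in> carrier R" and y: "y \<in> carrier R" and e: "a \<otimes> x = a \<otimes> y"
    have "a \<otimes> (x \<ominus> y) = \<zero>" using e x y a by (simp add: r_distr minus_eq r_minus r_neg)
    hence "x \<ominus> y = \<zero>" using nz x y by simp
    moreover have "x = (x \<ominus> y) \<oplus> y" using x y by algebra
    ultimately show "x = y" using y by simp
  qed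
  have "(\<lambda>b. a \<otimes> b) ` carrier R \<subseteq> carrier R" using a by auto
  hence "(\<lambda>b. a \<otimes> b) ` carrier R = carrier R" using inj fin
    by (simp add: endo_inj_surj)
  then obtain b where b: "b \<in> carrier R" "a \<otimes> b = \<one>" by (metis image_iff one_closed)
  thus "a \<in> Units R" using a unfolding Units_def by (auto simp: m_comm intro!: bexI[of _ b])
next
  assume u: "a \<in> Units R"
  have "a \<noteq> \<zero>" using u nt
    by (metis Units_l_inv_ex r_null Units_closed zero_closed)
  moreover have "b = \<zero>" if b: "b \<in> carrier R" "a \<otimes> b = \<zero>" for b
  proof -
    obtain c where c: "c \<in> carrier R" "c \<otimes> a = \<one>" using u Units_l_inv_ex by blast
    have "\<zero> = c \<otimes> (a \<otimes> b)" using b c by simp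
    also have "\<dots> = (c \<otimes> a) \<otimes> b" by (rule m_assoc[symmetric, OF c(1) a b(1)])
    also have "\<dots> = b" using b c by simp
    finally show ?thesis by simp
  qed
  ultimately show "a \<notin> zero_divs R" unfolding zero_divs_def by auto
qed

lemma (in cring) fin_max_ideal:
  assumes fin: "finite (carrier R)" and I: "ideal I R" and Ip: "I \<noteq> carrier R"
  shows "\<exists>M. maximalideal M R \<and> I \<subseteq> M"
proof -
  define S where "S = {K. ideal K R \<and> I \<subseteq> K \<and> K \<noteq> carrier R}"
  have "S \<subseteq> Pow (carrier R)" unfolding S_def by (auto dest: ideal.Icarr)
  hence finS: "finite S" by (rule finite_subset) (simp add: fin)
  have "I \<in> S" using I Ip unfolding S_def by simp
  then obtain M where M: "M \<in> S" "\<And>K. K \<in> S \<Longrightarrow> M \<subseteq> K \<Longrightarrow> M = K"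
    using finite_has_maximal2[OF finS] by metis
  have "maximalideal M R"
  proof (rule maximalidealI)
    show "ideal M R" using M unfolding S_def by simp
    have "M \<noteq> carrier R" using M(1) unfolding S_def by simp
    thus "carrier R \<noteq> M" by (rule not_sym)
    fix K assume K: "ideal K R" "M \<subseteq> K" "K \<subseteq> carrier R"
    show "K = M \<or> K = carrier R"
    proof (cases "K = carrier R")
      case False
      hence "K \<in> S" using K M(1) unfolding S_def by auto
      thus ?thesis using M(2) K by auto
    qed simp
  qed
  thus ?thesis using M unfolding S_def by auto
qed

lemma (in cring) jac_props:
  assumes fin: "finite (carrier R)" and nt: "\<one> \<noteq> \<zero>"
  shows "ideal (jacobson R) R" and "jacobson R \<noteq> carrier R"
    and "\<And>j. j \<in> jacobson R \<Longrightarrow> \<one> \<oplus> j \<in> Units R"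
proof -
  have z: "ideal {\<zero>} R" by (rule zeroideal)
  have "{\<zero>} \<noteq> carrier R" using nt one_closed by (metis singletonD)
  then obtain M0 where M0: "maximalideal M0 R" using fin_max_ideal[OF fin z] by auto
  have sub: "\<Inter>{I. maximalideal I R} \<subseteq> carrier R"
    using M0 by (auto dest: maximalideal.axioms(1) ideal.Icarr)
  have Jeq: "jacobson R = \<Inter>{I. maximalideal I R}"
    unfolding jacobson_def using sub by (simp add: Int_absorb1)
  show "ideal (jacobson R) R" unfolding Jeq
    by (rule i_Intersect) (use M0 in \<open>auto intro: maximalideal.axioms(1)\<close>)
  show "jacobson R \<noteq> carrier R"
  proof
    assume "jacobson R = carrier R"
    hence "\<one> \<in> \<Inter>{I. maximalideal I R}" using Jeq one_closed by simp
    hence o: "\<one> \<in> M0" using M0 by simp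
    interpret M0: maximalideal M0 R by (rule M0)
    show False using o M0.one_imp_carrier M0.I_notcarr by simp
  qed
  fix j assume j: "j \<in> jacobson R"
  hence jc: "j \<in> carrier R" unfolding jacobson_def by simp
  show "\<one> \<oplus> j \<in> Units R"
  proof (rule ccontr)
    assume nu: "\<one> \<oplus> j \<notin> Units R"
    let ?u = "\<one> \<oplus> j"
    have uc: "?u \<in> carrier R" using jc by simp
    have P: "ideal (PIdl ?u) R" using cgenideal_ideal uc by simp
    have "PIdl ?u \<noteq> carrier R"
    proof
      assume "PIdl ?u = carrier R"
      hence "\<one> \<in> PIdl ?u" by simp
      then obtain x where x: "x \<in> carrier R" "\<one> = x \<otimes> ?u" unfolding cgenideal_def by auto
      hence "?u \<otimes> x = \<one>" using uc by (simp add: m_comm)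
      hence "?u \<in> Units R" using uc x unfolding Units_def by (auto intro!: bexI[of _ x])
      thus False using nu by simp
    qed
    then obtain M where M: "maximalideal M R" "PIdl ?u \<subseteq> M" using fin_max_ideal[OF fin P] by auto
    have uM: "?u \<in> M" using M(2) cgenideal_self[OF uc] by (rule subsetD)
    have jM: "j \<in> M" using j M(1) unfolding jacobson_def by simp
    interpret M: maximalideal M R by (rule M(1))
    have "?u \<ominus> j \<in> M" using uM jM by (simp add: M.a_closed minus_eq M.a_inv_closed)
    moreover have "?u \<ominus> j = \<one>" using jc by algebra
    ultimately have "\<one> \<in> M" by simp
    thus False using M.one_imp_carrier M.I_notcarr by simp
  qed
qed


lemma chrom_le:
  assumes "\<forall>x\<in>V. c x < k" "\<forall>x\<in>V. \<forall>y\<in>V. E x y \<longrightarrow> c x \<noteq> c y"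
  shows "chromatic_number V E \<le> k"
  unfolding chromatic_number_def by (rule Least_le) (use assms in blast)

lemma chrom_ex:
  assumes "finite V" "\<And>x. \<not> E x x"
  shows "\<exists>c. (\<forall>x\<in>V. c x < chromatic_number V E) \<and> (\<forall>x\<in>V. \<forall>y\<in>V. E x y \<longrightarrow> c x \<noteq> c y)"
proof -
  obtain f where f: "bij_betw f V {0..<card V}" using ex_bij_betw_finite_nat[OF assms(1)] by blast
  have "\<exists>c. (\<forall>x\<in>V. c x < card V) \<and> (\<forall>x\<in>V. \<forall>y\<in>V. E x y \<longrightarrow> c x \<noteq> c y)"
  proof (intro exI[of _ f] conjI ballI impI)
    fix x assume "x \<in> V" thus "f x < card V" using f bij_betwE by fastforce
  next
    fix x y assume "x \<in> V" "y \<in> V" "E x y"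
    moreover hence "x \<noteq> y" using assms(2) by metis
    ultimately show "f x \<noteq> f y" using f bij_betw_imp_inj_on inj_on_def by metis
  qed
  thus ?thesis unfolding chromatic_number_def by - (rule LeastI_ex, blast)
qed

lemma adj_irrefl: "\<not> total_adj S x x" unfolding total_adj_def by simp

lemma arith_aux: "(a::nat) < k \<Longrightarrow> i < n \<Longrightarrow> a * n + i < k * n"
proof -
  assume a: "a < k" and i: "i < n"
  have "a * n + i < Suc a * n" using i by simp
  also have "\<dots> \<le> k * n" using a by (intro mult_le_mono1) simp
  finally show ?thesis .
qed

lemma arith_aux2: "(i::nat) < n \<Longrightarrow> j < n \<Longrightarrow> a * n + i = b * n + j \<Longrightarrow> a = b \<and> i = j"
proof -
  assume i: "i < n" and j: "j < n" and e: "a * n + i = b * n + j"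
  have "(a * n + i) div n = a" "(b * n + j) div n = b" using i j by simp_all
  hence ab: "a = b" using e by metis
  thus ?thesis using e by simp
qed

lemma (in cring) triv_reg: "\<one> = \<zero> \<Longrightarrow> regular_elems R = {}"
proof -
  assume T: "\<one> = \<zero>"
  have "x \<in> zero_divs R" if "x \<in> carrier R" for x
  proof -
    have "x = x \<otimes> \<one>" using that by simp
    also have "\<dots> = \<zero>" using that T by simp
    finally show ?thesis unfolding zero_divs_def by simp
  qed
  thus ?thesis unfolding regular_elems_def by auto
qed

locale fcr = cring + assumes fin: "finite (carrier R)" and nt: "\<one> \<noteq> \<zero>"
begin

lemma J_ideal: "ideal (jacobson R) R" using jac_props(1)[OF fin nt] .

sublocale J: ideal "jacobson R" R by (rule J_ideal)

lemma J_unit: "j \<in> jacobson R \<Longrightarrow> \<one> \<oplus> j \<in> Units R" using jac_props(3)[OF fin nt] by blast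

lemma J_notcarr: "jacobson R \<noteq> carrier R" using jac_props(2)[OF fin nt] .

abbreviation "Q \<equiv> R Quot (jacobson R)"
abbreviation "h \<equiv> (+>) (jacobson R)"

lemma Q_cring: "cring Q" by (rule J.quotient_is_cring[OF is_cring])
lemma hom: "h \<in> ring_hom R Q" by (rule J.rcos_ring_hom)

lemma Q_carrier: "carrier Q = h ` carrier R"
  unfolding FactRing_def A_RCOSETS_def' by auto

lemma Q_fin: "finite (carrier Q)" unfolding Q_carrier using fin by simp

lemma h_add: "x \<in> carrier R \<Longrightarrow> y \<in> carrier R \<Longrightarrow> h x \<oplus>\<^bsub>Q\<^esub> h y = h (x \<oplus> y)"
  using ring_hom_add[OF hom] by simp
lemma h_mult: "x \<in> carrier R \<Longrightarrow> y \<in> carrier R \<Longrightarrow> h x \<otimes>\<^bsub>Q\<^esub> h y = h (x \<otimes> y)"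
  using ring_hom_mult[OF hom] by simp
lemma h_one: "\<one>\<^bsub>Q\<^esub> = h \<one>" using ring_hom_one[OF hom] by simp
lemma Q_zero: "\<zero>\<^bsub>Q\<^esub> = jacobson R" unfolding FactRing_def by simp

lemma h_eq: "x \<in> carrier R \<Longrightarrow> y \<in> carrier R \<Longrightarrow> (h x = h y) = (x \<ominus> y \<in> jacobson R)"
proof -
  assume x: "x \<in> carrier R" and y: "y \<in> carrier R"
  have "(x \<in> h y) = (x \<ominus> y \<in> jacobson R)" by (rule J.a_rcos_module_minus[OF ring_axioms y x])
  moreover have "(h x = h y) = (x \<in> h y)"
    using J.a_repr_independence' J.a_repr_independenceD x y by metis
  ultimately show ?thesis by simp
qed

lemma Q_nt: "\<one>\<^bsub>Q\<^esub> \<noteq> \<zero>\<^bsub>Q\<^esub>"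
proof
  assume "\<one>\<^bsub>Q\<^esub> = \<zero>\<^bsub>Q\<^esub>"
  hence "h \<one> = h \<zero>" unfolding h_one Q_zero using J.a_rcos_const[OF J.additive_subgroup_axioms[THEN additive_subgroup.zero_closed]] by simp
  hence "\<one> \<ominus> \<zero> \<in> jacobson R" using h_eq by simp
  hence "\<one> \<in> jacobson R" by (simp add: minus_eq)
  thus False using J.one_imp_carrier J_notcarr by simp
qed

lemma h_units: "x \<in> carrier R \<Longrightarrow> (h x \<in> Units Q) = (x \<in> Units R)"
proof
  assume x: "x \<in> carrier R" and u: "x \<in> Units R"
  obtain y where y: "y \<in> carrier R" "y \<otimes> x = \<one>" "x \<otimes> y = \<one>" using u unfolding Units_def by auto
  have "h y \<otimes>\<^bsub>Q\<^esub> h x = \<one>\<^bsub>Q\<^esub>" "h x \<otimes>\<^bsub>Q\<^esub> h y = \<one>\<^bsub>Q\<^esub>"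
    using y x by (simp_all add: h_mult h_one)
  moreover have "h y \<in> carrier Q" "h x \<in> carrier Q" using x y Q_carrier by auto
  ultimately show "h x \<in> Units Q" unfolding Units_def by auto
next
  assume x: "x \<in> carrier R" and u: "h x \<in> Units Q"
  obtain C where C: "C \<in> carrier Q" "C \<otimes>\<^bsub>Q\<^esub> h x = \<one>\<^bsub>Q\<^esub>" using u unfolding Units_def by auto
  obtain y where y: "y \<in> carrier R" "C = h y" using C(1) Q_carrier by auto
  have "h (y \<otimes> x) = h \<one>" using C y x by (simp add: h_mult h_one)
  hence "y \<otimes> x \<ominus> \<one> \<in> jacobson R" using h_eq x y by simp
  hence "\<one> \<oplus> (y \<otimes> x \<ominus> \<one>) \<in> Units R" by (rule J_unit)
  moreover have "\<one> \<oplus> (y \<otimes> x \<ominus> \<one>) = y \<otimes> x" using x y by algebra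
  ultimately have yx: "y \<otimes> x \<in> Units R" by simp
  define w where "w = inv (y \<otimes> x) \<otimes> y"
  have wc: "w \<in> carrier R" unfolding w_def using yx y by simp
  have "w \<otimes> x = inv (y \<otimes> x) \<otimes> (y \<otimes> x)" unfolding w_def using yx x y by (simp add: m_assoc)
  also have "\<dots> = \<one>" using yx by simp
  finally have wx: "w \<otimes> x = \<one>" .
  hence "x \<otimes> w = \<one>" using wc x by (simp add: m_comm)
  thus "x \<in> Units R" using wx wc x unfolding Units_def by (auto intro!: bexI[of _ w])
qed

lemma h_zd: "x \<in> carrier R \<Longrightarrow> (h x \<in> zero_divs Q) = (x \<in> zero_divs R)"
proof -
  assume x: "x \<in> carrier R"
  have hx: "h x \<in> carrier Q" using x Q_carrier by auto
  have "(h x \<notin> zero_divs Q) = (h x \<in> Units Q)"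
    by (rule cring.fin_nzd_unit[OF Q_cring Q_fin Q_nt hx])
  also have "\<dots> = (x \<in> Units R)" using h_units x by simp
  also have "\<dots> = (x \<notin> zero_divs R)" using fin_nzd_unit[OF fin nt x] by simp
  finally show ?thesis by simp
qed

definition rep :: "'a set \<Rightarrow> 'a" where "rep C = (SOME z. z \<in> C)"

lemma rep_props: "x \<in> carrier R \<Longrightarrow> rep (h x) \<in> carrier R \<and> h (rep (h x)) = h x"
proof -
  assume x: "x \<in> carrier R"
  have "x \<in> h x" using J.a_rcos_self[OF x] .
  hence r: "rep (h x) \<in> h x" unfolding rep_def by (rule someI)
  have rc: "rep (h x) \<in> carrier R" using a_r_coset_subset_G[OF J.a_subset x] r by blast
  have "h x = h (rep (h x))" using J.a_repr_independence'[OF r x] .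
  thus ?thesis using rc by simp
qed

lemma reg_h: "x \<in> carrier R \<Longrightarrow> (h x \<in> regular_elems Q) = (x \<in> regular_elems R)"
  unfolding regular_elems_def using h_zd Q_carrier by auto

lemma regQ_elem: "C \<in> regular_elems Q \<Longrightarrow> \<exists>x\<in>carrier R. C = h x"
  unfolding regular_elems_def using Q_carrier by auto

lemma adj_Q: "x \<in> carrier R \<Longrightarrow> y \<in> carrier R \<Longrightarrow> total_adj Q (h x) (h y) = (h x \<noteq> h y \<and> x \<oplus> y \<in> zero_divs R)"
  unfolding total_adj_def using h_add h_zd by simp

lemma nonadj_same:
  assumes two: "\<one> \<oplus> \<one> \<notin> zero_divs R" and x: "x \<in> regular_elems R" and y: "y \<in> regular_elems R"
    and e: "h x = h y"
  shows "x \<oplus> y \<notin> zero_divs R"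
proof -
  have xc: "x \<in> carrier R" and yc: "y \<in> carrier R" using x y unfolding regular_elems_def by auto
  have xu: "x \<in> Units R" using x fin_nzd_unit[OF fin nt xc] unfolding regular_elems_def by auto
  have tu: "\<one> \<oplus> \<one> \<in> Units R" using two fin_nzd_unit[OF fin nt] by simp
  have pu: "(\<one> \<oplus> \<one>) \<otimes> x \<in> Units R" using tu xu by (rule Units_m_closed)
  have pc: "(\<one> \<oplus> \<one>) \<otimes> x \<in> carrier R" using xc by simp
  have "h (x \<oplus> y) = h x \<oplus>\<^bsub>Q\<^esub> h y" using h_add xc yc by simp
  also have "\<dots> = h (x \<oplus> x)" using h_add[OF xc xc] e[symmetric] by simp
  also have "x \<oplus> x = (\<one> \<oplus> \<one>) \<otimes> x" using xc by algebra
  finally have eq: "h (x \<oplus> y) = h ((\<one> \<oplus> \<one>) \<otimes> x)" .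
  have "(\<one> \<oplus> \<one>) \<otimes> x \<notin> zero_divs R" using pu fin_nzd_unit[OF fin nt pc] by simp
  hence "h ((\<one> \<oplus> \<one>) \<otimes> x) \<notin> zero_divs Q" using h_zd[OF pc] by simp
  hence "h (x \<oplus> y) \<notin> zero_divs Q" using eq by simp
  thus ?thesis using h_zd xc yc by simp
qed

lemma part1: "chi_reg R \<le> card (jacobson R) * chi_reg Q"
proof -
  let ?n = "card (jacobson R)" and ?k = "chi_reg Q"
  have finQ: "finite (regular_elems Q)" using Q_fin unfolding regular_elems_def by simp
  obtain c' where c': "\<forall>x\<in>regular_elems Q. c' x < ?k"
      "\<forall>x\<in>regular_elems Q. \<forall>y\<in>regular_elems Q. total_adj Q x y \<longrightarrow> c' x \<noteq> c' y"
    using chrom_ex[OF finQ, of "total_adj Q", OF adj_irrefl] unfolding chi_reg_def by blast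
  have finJ: "finite (jacobson R)" using fin J.a_subset finite_subset by blast
  obtain f where f: "bij_betw f (jacobson R) {0..<?n}" using ex_bij_betw_finite_nat[OF finJ] by blast
  define idx where "idx x = f (x \<ominus> rep (h x))" for x
  define col where "col x = c' (h x) * ?n + idx x" for x
  have inJ: "x \<ominus> rep (h x) \<in> jacobson R" if "x \<in> carrier R" for x
    using rep_props[OF that] h_eq[OF that, of "rep (h x)"] by simp
  have idx_lt: "idx x < ?n" if "x \<in> carrier R" for x
    unfolding idx_def using inJ[OF that] f bij_betwE by fastforce
  show ?thesis unfolding chi_reg_def[of R]
  proof (rule chrom_le[where c = col])
    show "\<forall>x\<in>regular_elems R. col x < ?n * ?k"
    proof
      fix x assume x: "x \<in> regular_elems R"
      hence xc: "x \<in> carrier R" unfolding regular_elems_def by simp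
      have "c' (h x) < ?k" using c'(1) reg_h[OF xc] x by simp
      hence "c' (h x) * ?n + idx x < ?k * ?n" using idx_lt[OF xc] by (rule arith_aux)
      thus "col x < ?n * ?k" unfolding col_def by (simp add: mult.commute)
    qed
    show "\<forall>x\<in>regular_elems R. \<forall>y\<in>regular_elems R. total_adj R x y \<longrightarrow> col x \<noteq> col y"
    proof (intro ballI impI notI)
      fix x y assume x: "x \<in> regular_elems R" and y: "y \<in> regular_elems R"
        and adj: "total_adj R x y" and e: "col x = col y"
      have xc: "x \<in> carrier R" and yc: "y \<in> carrier R" using x y unfolding regular_elems_def by auto
      from arith_aux2[OF idx_lt[OF xc] idx_lt[OF yc]] e
      have ce: "c' (h x) = c' (h y)" and ie: "idx x = idx y" unfolding col_def by auto
      show False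
      proof (cases "h x = h y")
        case True
        hence "f (x \<ominus> rep (h x)) = f (y \<ominus> rep (h x))" using ie unfolding idx_def by simp
        moreover have "x \<ominus> rep (h x) \<in> jacobson R" "y \<ominus> rep (h x) \<in> jacobson R"
          using inJ[OF xc] inJ[OF yc] True by auto
        ultimately have "x \<ominus> rep (h x) = y \<ominus> rep (h x)"
          using f bij_betw_imp_inj_on inj_on_def by metis
        moreover have "rep (h x) \<in> carrier R" using rep_props[OF xc] by simp
        ultimately have "x = y" using xc yc by (metis minus_equality a_minus_def add.m_closed a_inv_closed
            a_assoc l_neg r_zero add.l_inv)
        thus False using adj unfolding total_adj_def by simp
      next
        case False
        have "total_adj Q (h x) (h y)" using adj_Q[OF xc yc] False adj unfolding total_adj_def by simp
        moreover have "h x \<in> regular_elems Q" "h y \<in> regular_elems Q" using reg_h xc yc x y by auto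
        ultimately show False using c'(2) ce by blast
      qed
    qed
  qed
qed

lemma part2a: "chi_reg Q \<le> chi_reg R"
proof -
  have finR: "finite (regular_elems R)" using fin unfolding regular_elems_def by simp
  obtain c where c: "\<forall>x\<in>regular_elems R. c x < chi_reg R"
      "\<forall>x\<in>regular_elems R. \<forall>y\<in>regular_elems R. total_adj R x y \<longrightarrow> c x \<noteq> c y"
    using chrom_ex[OF finR, of "total_adj R", OF adj_irrefl] unfolding chi_reg_def by blast
  have repR: "rep C \<in> regular_elems R \<and> h (rep C) = C" if CQ: "C \<in> regular_elems Q" for C
  proof -
    obtain x where x: "x \<in> carrier R" "C = h x" using regQ_elem[OF CQ] by blast
    have "rep C \<in> carrier R" "h (rep C) = C" using rep_props[OF x(1)] x(2) by auto
    moreover have "rep C \<in> regular_elems R" using reg_h[OF calculation(1)] calculation(2) CQ by simp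
    ultimately show ?thesis by simp
  qed
  show ?thesis unfolding chi_reg_def[of Q]
  proof (rule chrom_le[where c = "\<lambda>C. c (rep C)"])
    show "\<forall>x\<in>regular_elems Q. c (rep x) < chi_reg R" using repR c(1) by blast
    show "\<forall>x\<in>regular_elems Q. \<forall>y\<in>regular_elems Q. total_adj Q x y \<longrightarrow> c (rep x) \<noteq> c (rep y)"
    proof (intro ballI impI)
      fix C D assume C: "C \<in> regular_elems Q" and D: "D \<in> regular_elems Q" and adj: "total_adj Q C D"
      have r1: "rep C \<in> regular_elems R" "h (rep C) = C" using repR[OF C] by auto
      have r2: "rep D \<in> regular_elems R" "h (rep D) = D" using repR[OF D] by auto
      have rc: "rep C \<in> carrier R" "rep D \<in> carrier R" using r1 r2 unfolding regular_elems_def by auto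
      have "total_adj Q (h (rep C)) (h (rep D))" using adj r1 r2 by simp
      hence "h (rep C) \<noteq> h (rep D) \<and> rep C \<oplus> rep D \<in> zero_divs R" using adj_Q[OF rc] by simp
      hence "total_adj R (rep C) (rep D)" unfolding total_adj_def by auto
      thus "c (rep C) \<noteq> c (rep D)" using c(2) r1 r2 by blast
    qed
  qed
qed

lemma part2b:
  assumes two: "\<one> \<oplus> \<one> \<notin> zero_divs R"
  shows "chi_reg R \<le> chi_reg Q"
proof -
  have finQ: "finite (regular_elems Q)" using Q_fin unfolding regular_elems_def by simp
  obtain c' where c': "\<forall>x\<in>regular_elems Q. c' x < chi_reg Q"
      "\<forall>x\<in>regular_elems Q. \<forall>y\<in>regular_elems Q. total_adj Q x y \<longrightarrow> c' x \<noteq> c' y"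
    using chrom_ex[OF finQ, of "total_adj Q", OF adj_irrefl] unfolding chi_reg_def by blast
  show ?thesis unfolding chi_reg_def[of R]
  proof (rule chrom_le[where c = "\<lambda>x. c' (h x)"])
    show "\<forall>x\<in>regular_elems R. c' (h x) < chi_reg Q"
      using c'(1) reg_h unfolding regular_elems_def by auto
    show "\<forall>x\<in>regular_elems R. \<forall>y\<in>regular_elems R. total_adj R x y \<longrightarrow> c' (h x) \<noteq> c' (h y)"
    proof (intro ballI impI)
      fix x y assume x: "x \<in> regular_elems R" and y: "y \<in> regular_elems R" and adj: "total_adj R x y"
      have xc: "x \<in> carrier R" and yc: "y \<in> carrier R" using x y unfolding regular_elems_def by auto
      have z: "x \<oplus> y \<in> zero_divs R" using adj unfolding total_adj_def by simp
      hence "h x \<noteq> h y" using nonadj_same[OF two x y] by blast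
      hence "total_adj Q (h x) (h y)" using adj_Q[OF xc yc] z by simp
      moreover have "h x \<in> regular_elems Q" "h y \<in> regular_elems Q" using reg_h xc yc x y by auto
      ultimately show "c' (h x) \<noteq> c' (h y)" using c'(2) by blast
    qed
  qed
qed

end

theorem lemma17:
  fixes R :: "('a, 'b) ring_scheme"
  assumes "cring R" and "finite (carrier R)"
  shows "chi_reg R \<le> card (jacobson R) * chi_reg (R Quot (jacobson R)) \<and>
         (\<one>\<^bsub>R\<^esub> \<oplus>\<^bsub>R\<^esub> \<one>\<^bsub>R\<^esub> \<notin> zero_divs R \<longrightarrow>
          chi_reg R = chi_reg (R Quot (jacobson R)))"
proof (cases "\<one>\<^bsub>R\<^esub> = \<zero>\<^bsub>R\<^esub>")
  case True
  interpret cring R by fact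
  have "regular_elems R = {}" using triv_reg True by simp
  hence "chi_reg R = 0" unfolding chi_reg_def using chrom_le[of "{}" _ 0] by simp
  moreover have "\<one>\<^bsub>R\<^esub> \<oplus>\<^bsub>R\<^esub> \<one>\<^bsub>R\<^esub> \<in> zero_divs R"
    using True unfolding zero_divs_def by simp
  ultimately show ?thesis by simp
next
  case False
  interpret fcr R using assms False by (simp add: fcr.intro fcr_axioms.intro cring.axioms)
  show ?thesis using part1 part2a part2b by (meson le_antisym)
qed

end
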